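(* Let $\eta > 0$, let $\mathrm{smax}_\eta(z) = \eta \ln\left(\sum_{j=1}^m e^{z_j/\eta}\right)$ for $z \in \mathbb{R}^m_+$, and let $\nabla \mathrm{smax}_\eta$ denote its gradient. Let $A \in \mathbb{R}^{m \times n}_+$ and $x \in \mathbb{R}^n_+$ with $\|A x\|_\infty \le 1$. Let $M$ be an $n\times n$ diagonal matrix with $M \preceq I$, let $d = \eta M x$, and suppose $\frac{1}{\eta}\|A d\|_\infty \le 1/2$. Then $$\mathrm{smax}_\eta(A(x+d)) \le \mathrm{smax}_\eta(Ax) + \eta \left\langle A^\top \nabla \mathrm{smax}_\eta(Ax),\; M x + M^2 x \right\rangle.$$ Furthermore, given $\lambda \in \mathbb{R}_+$ and $c \in \mathbb{R}^n_+$, if $M$ is the diagonal matrix with $$M_{ii} = \left(1 - \lambda \cdot \frac{(A^\top \nabla \mathrm{smax}_\eta(Ax))_i}{c_i}\right) \vee 0,$$ then, with $d = \eta M x$, $$\frac{\mathrm{smax}_\eta(A(x+d)) - \mathrm{smax}_\eta(Ax)}{\langle c, d\rangle} \le \frac{1}{\lambda}.$$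
   Context: $\mathrm{smax}_\eta$ is the softmax function with parameter $\eta$; its gradient has entries $\nabla_j \mathrm{smax}_\eta(z) = e^{z_j/\eta}/\sum_{\ell} e^{z_\ell/\eta}$. $a \vee b$ denotes $\max\{a,b\}$. $M \preceq I$ means $I - M$ is positive semidefinite. This corollary follows from the following lemma: for $x, d \in \mathbb{R}^n_+$ and $A \in \mathbb{R}^{m\times n}_+$ with $\frac{1}{\eta}\|Ad\|_\infty \le 1/2$, $\mathrm{smax}_\eta(A(x+d)) \le \mathrm{smax}_\eta(Ax) + \langle A^\top \nabla \mathrm{smax}_\eta(Ax),\, d + \|Ax\|_\infty \cdot \frac{1}{\eta} \cdot D(x)^\dagger (d \circ d)\rangle$, where $D(x)^\dagger$ is the diagonal matrix with entries $1/x_i$ for $x_i \ne 0$ and $0$ otherwise, and $\circ$ is the coordinatewise product. *)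

theory Defs
  imports "HOL-Analysis.Analysis"
begin

definition smax :: "real \<Rightarrow> real^'m \<Rightarrow> real" where
  "smax \<eta> z = \<eta> * ln (\<Sum>j\<in>UNIV. exp (z $ j / \<eta>))"

definition grad_smax :: "real \<Rightarrow> real^'m \<Rightarrow> real^'m" where
  "grad_smax \<eta> z = (\<chi> j. exp (z $ j / \<eta>) / (\<Sum>l\<in>UNIV. exp (z $ l / \<eta>)))"

definition is_diag :: "real^'n^'n \<Rightarrow> bool" where
  "is_diag M \<longleftrightarrow> (\<forall>i j. i \<noteq> j \<longrightarrow> M $ i $ j = 0)"

definition loewner_le :: "real^'n^'n \<Rightarrow> real^'n^'n \<Rightarrow> bool" where
  "loewner_le M N \<longleftrightarrow> (\<forall>v. 0 \<le> v \<bullet> ((N - M) *v v))"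

end

theory Submission
  imports Defs
begin


lemma exp_quad: fixes t :: real assumes "\<bar>t\<bar> \<le> 1/2" shows "exp t \<le> 1 + t + t\<^sup>2"
proof (cases "t \<ge> 0")
  case True thus ?thesis using exp_bound[of t] assms by simp
next
  case False
  define s where "s = -t"
  have s: "0 \<le> s" "s \<le> 1/2" using False assms s_def by auto
  have "exp t = 1 / exp s" using s_def by (simp add: exp_minus field_simps)
  also have "\<dots> \<le> 1 / (1 + s)" using s exp_ge_add_one_self[of s]
    by (intro divide_left_mono) auto
  also have "\<dots> \<le> 1 - s + s\<^sup>2"
  proof -
    have "1 \<le> (1 + s) * (1 - s + s\<^sup>2)" using s by (simp add: algebra_simps power2_eq_square power3_eq_cube)
    thus ?thesis using s by (simp add: field_simps)
  qed
  finally show ?thesis using s_def by simp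
qed

lemma smax_step:
  fixes z w :: "real^'m"
  assumes eta: "\<eta> > 0" and w: "\<And>j. \<bar>w $ j\<bar> \<le> \<eta>/2"
  shows "smax \<eta> (z + w) \<le> smax \<eta> z + (\<Sum>j\<in>UNIV. grad_smax \<eta> z $ j * (w $ j + (w $ j)\<^sup>2 / \<eta>))"
proof -
  define S where "S = (\<Sum>j\<in>UNIV. exp (z $ j / \<eta>))"
  have Spos: "S > 0" unfolding S_def by (intro sum_pos) auto
  define u where "u = (\<Sum>j\<in>UNIV. (exp (z $ j / \<eta>) / S) * (w $ j / \<eta> + (w $ j / \<eta>)\<^sup>2))"
  have "(\<Sum>j\<in>UNIV. exp ((z + w) $ j / \<eta>)) = (\<Sum>j\<in>UNIV. exp (z $ j / \<eta>) * exp (w $ j / \<eta>))"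
    by (simp add: add_divide_distrib exp_add)
  also have "\<dots> \<le> (\<Sum>j\<in>UNIV. exp (z $ j / \<eta>) * (1 + w $ j / \<eta> + (w $ j / \<eta>)\<^sup>2))"
  proof (intro sum_mono mult_left_mono)
    fix j
    have "\<bar>w $ j / \<eta>\<bar> = \<bar>w $ j\<bar> / \<eta>" using eta by simp
    also have "\<dots> \<le> (\<eta>/2) / \<eta>" using w[of j] eta by (intro divide_right_mono) auto
    also have "\<dots> = 1/2" using eta by simp
    finally have "\<bar>w $ j / \<eta>\<bar> \<le> 1/2" .
    thus "exp (w $ j / \<eta>) \<le> 1 + w $ j / \<eta> + (w $ j / \<eta>)\<^sup>2" by (rule exp_quad)
  qed auto
  also have "\<dots> = S * (1 + u)"
  proof -
    have "S * u = (\<Sum>j\<in>UNIV. exp (z $ j / \<eta>) * (w $ j / \<eta> + (w $ j / \<eta>)\<^sup>2))"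
      unfolding u_def sum_distrib_left using Spos by (intro sum.cong) auto
    moreover have "(\<Sum>j\<in>UNIV. exp (z $ j / \<eta>) * (1 + w $ j / \<eta> + (w $ j / \<eta>)\<^sup>2))
       = S + (\<Sum>j\<in>UNIV. exp (z $ j / \<eta>) * (w $ j / \<eta> + (w $ j / \<eta>)\<^sup>2))"
      unfolding S_def sum.distrib[symmetric] by (intro sum.cong) (auto simp: distrib_left)
    ultimately show ?thesis by (simp add: distrib_left)
  qed
  finally have le: "(\<Sum>j\<in>UNIV. exp ((z + w) $ j / \<eta>)) \<le> S * (1 + u)" .
  have pos: "0 < (\<Sum>j\<in>UNIV. exp ((z + w) $ j / \<eta>))" by (intro sum_pos) auto
  have pu: "0 < 1 + u" using le pos Spos by (smt (verit) zero_less_mult_iff)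
  have l1: "ln (\<Sum>j\<in>UNIV. exp ((z + w) $ j / \<eta>)) \<le> ln (S * (1 + u))"
    using le pos by simp
  have l2: "ln (S * (1 + u)) = ln S + ln (1 + u)"
    using pu Spos by (simp add: ln_mult)
  have l3: "ln (1 + u) \<le> u"
    using ln_le_minus_one[OF pu] by simp
  have "ln (\<Sum>j\<in>UNIV. exp ((z + w) $ j / \<eta>)) \<le> ln S + u" using l1 l2 l3 by linarith
  hence "\<eta> * ln (\<Sum>j\<in>UNIV. exp ((z + w) $ j / \<eta>)) \<le> \<eta> * ln S + \<eta> * u"
    using eta by (metis distrib_left mult_left_mono less_imp_le)
  hence "smax \<eta> (z + w) \<le> smax \<eta> z + \<eta> * u"
    unfolding smax_def S_def .
  also have "\<eta> * u = (\<Sum>j\<in>UNIV. grad_smax \<eta> z $ j * (w $ j + (w $ j)\<^sup>2 / \<eta>))"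
    unfolding u_def grad_smax_def S_def[symmetric] sum_distrib_left
  proof (intro sum.cong refl)
    fix j
    show "\<eta> * (exp (z $ j / \<eta>) / S * (w $ j / \<eta> + (w $ j / \<eta>)\<^sup>2)) =
      (\<chi> j. exp (z $ j / \<eta>) / S) $ j * (w $ j + (w $ j)\<^sup>2 / \<eta>)"
      using eta Spos by (simp add: power2_eq_square field_simps)
  qed
  finally show ?thesis .
qed


lemma mv_comp: "((A::real^'n^'m) *v v) $ j = (\<Sum>i\<in>UNIV. A $ j $ i * v $ i)"
  by (simp add: matrix_vector_mult_def)

lemma transpose_inner: "((transpose (A::real^'n^'m)) *v p) \<bullet> v = (\<Sum>j\<in>UNIV. p $ j * (A *v v) $ j)"
proof -
  have "((transpose A) *v p) \<bullet> v = (\<Sum>i\<in>UNIV. (\<Sum>j\<in>UNIV. A $ j $ i * p $ j) * v $ i)"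
    by (simp add: inner_vec_def matrix_vector_mult_def transpose_def mult.commute)
  also have "\<dots> = (\<Sum>i\<in>UNIV. \<Sum>j\<in>UNIV. p $ j * (A $ j $ i * v $ i))"
    by (simp add: sum_distrib_left sum_distrib_right mult_ac)
  also have "\<dots> = (\<Sum>j\<in>UNIV. \<Sum>i\<in>UNIV. p $ j * (A $ j $ i * v $ i))"
    by (rule sum.swap)
  also have "\<dots> = (\<Sum>j\<in>UNIV. p $ j * (A *v v) $ j)"
    by (simp add: matrix_vector_mult_def sum_distrib_left)
  finally show ?thesis .
qed

lemma diag_mv: assumes "is_diag M" shows "(M *v v) $ i = M $ i $ i * v $ i"
proof -
  have "(M *v v) $ i = (\<Sum>k\<in>UNIV. if k = i then M $ i $ i * v $ i else 0)"
    unfolding mv_comp using assms unfolding is_diag_def by (intro sum.cong) auto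
  thus ?thesis by simp
qed

lemma weighted_sq:
  fixes q m :: "'a::finite \<Rightarrow> real"
  assumes q: "\<And>i. q i \<ge> 0" and s: "(\<Sum>i\<in>UNIV. q i) \<le> 1"
  shows "(\<Sum>i\<in>UNIV. q i * m i)\<^sup>2 \<le> (\<Sum>i\<in>UNIV. q i * (m i)\<^sup>2)"
proof -
  define \<mu> where "\<mu> = (\<Sum>i\<in>UNIV. q i * m i)"
  define Q where "Q = (\<Sum>i\<in>UNIV. q i)"
  have "0 \<le> (\<Sum>i\<in>UNIV. q i * (m i - \<mu>)\<^sup>2)" using q by (intro sum_nonneg) auto
  also have "(\<Sum>i\<in>UNIV. q i * (m i - \<mu>)\<^sup>2) =
     (\<Sum>i\<in>UNIV. q i * (m i)\<^sup>2 - 2 * \<mu> * (q i * m i) + \<mu>\<^sup>2 * q i)"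
    by (intro sum.cong) (auto simp: power2_eq_square algebra_simps)
  also have "\<dots> = (\<Sum>i\<in>UNIV. q i * (m i)\<^sup>2) - 2 * \<mu> * \<mu> + \<mu>\<^sup>2 * Q"
    unfolding \<mu>_def Q_def by (simp add: sum.distrib sum_subtractf sum_distrib_left)
  finally have "\<mu>\<^sup>2 * (2 - Q) \<le> (\<Sum>i\<in>UNIV. q i * (m i)\<^sup>2)"
    by (simp add: power2_eq_square algebra_simps)
  moreover have "\<mu>\<^sup>2 \<le> \<mu>\<^sup>2 * (2 - Q)"
    using s unfolding Q_def[symmetric] by (intro mult_le_cancel_left1[THEN iffD2]) auto
  ultimately show ?thesis unfolding \<mu>_def by linarith
qed


lemma part1:
  fixes \<eta> :: real and A :: "real^'n^'m" and x :: "real^'n" and M :: "real^'n^'n"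
  assumes eta_pos: "\<eta> > 0"
    and A_nonneg: "\<forall>i j. A $ i $ j \<ge> 0"
    and x_nonneg: "\<forall>i. x $ i \<ge> 0"
    and Ax_bound: "infnorm (A *v x) \<le> 1"
    and diag: "is_diag M"
    and small: "infnorm (A *v (\<eta> *\<^sub>R (M *v x))) / \<eta> \<le> 1/2"
  shows "smax \<eta> (A *v (x + \<eta> *\<^sub>R (M *v x)))
              \<le> smax \<eta> (A *v x)
                 + \<eta> * ((transpose A *v grad_smax \<eta> (A *v x)) \<bullet> (M *v x + (M ** M) *v x))"
proof -
  define p where "p = grad_smax \<eta> (A *v x)"
  define w where "w = A *v (\<eta> *\<^sub>R (M *v x))"
  have p_nonneg: "p $ j \<ge> 0" for j
    unfolding p_def grad_smax_def by (auto intro!: divide_nonneg_pos sum_pos)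
  have winf: "infnorm w \<le> \<eta> / 2" using small eta_pos unfolding w_def by (simp add: divide_le_eq)
  have wj: "\<bar>w $ j\<bar> \<le> \<eta> / 2" for j using component_le_infnorm_cart[of w j] winf by linarith
  have eq: "A *v (x + \<eta> *\<^sub>R (M *v x)) = A *v x + w"
    unfolding w_def by (simp add: matrix_vector_right_distrib)
  have step: "smax \<eta> (A *v (x + \<eta> *\<^sub>R (M *v x))) \<le> smax \<eta> (A *v x) + (\<Sum>j\<in>UNIV. p $ j * (w $ j + (w $ j)\<^sup>2 / \<eta>))"
    unfolding eq p_def by (rule smax_step[OF eta_pos wj])
  have MM: "((M ** M) *v x) $ i = M $ i $ i * (M $ i $ i * x $ i)" for i
    unfolding matrix_vector_mul_assoc[symmetric] using diag_mv[OF diag] by simp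
  have rhs: "(transpose A *v p) \<bullet> (M *v x + (M ** M) *v x) =
      (\<Sum>j\<in>UNIV. p $ j * ((A *v (M *v x)) $ j + (A *v ((M ** M) *v x)) $ j))"
    unfolding transpose_inner by (simp add: matrix_vector_right_distrib)
  have termb: "p $ j * (w $ j + (w $ j)\<^sup>2 / \<eta>) \<le>
      \<eta> * (p $ j * ((A *v (M *v x)) $ j + (A *v ((M ** M) *v x)) $ j))" for j
  proof -
    define a where "a = (A *v (M *v x)) $ j"
    define b where "b = (A *v ((M ** M) *v x)) $ j"
    have wa: "w $ j = \<eta> * a" unfolding w_def a_def by (simp add: matrix_vector_mult_scaleR)
    have a_eq: "a = (\<Sum>i\<in>UNIV. (A $ j $ i * x $ i) * M $ i $ i)"
      unfolding a_def mv_comp[of A] diag_mv[OF diag] by (simp add: mult_ac)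
    have b_eq: "b = (\<Sum>i\<in>UNIV. (A $ j $ i * x $ i) * (M $ i $ i)\<^sup>2)"
      unfolding b_def mv_comp[of A] MM by (simp add: mult_ac power2_eq_square)
    have s: "(\<Sum>i\<in>UNIV. A $ j $ i * x $ i) \<le> 1"
    proof -
      have "(\<Sum>i\<in>UNIV. A $ j $ i * x $ i) = (A *v x) $ j" by (simp add: mv_comp)
      also have "\<dots> \<le> \<bar>(A *v x) $ j\<bar>" by simp
      also have "\<dots> \<le> 1" using component_le_infnorm_cart[of "A *v x" j] Ax_bound by linarith
      finally show ?thesis .
    qed
    have ab: "a\<^sup>2 \<le> b" unfolding a_eq b_eq
      by (rule weighted_sq) (use A_nonneg x_nonneg s in auto)
    have "w $ j + (w $ j)\<^sup>2 / \<eta> = \<eta> * (a + a\<^sup>2)"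
      using eta_pos unfolding wa by (simp add: power2_eq_square field_simps)
    also have "\<dots> \<le> \<eta> * (a + b)" using ab eta_pos by simp
    finally have "w $ j + (w $ j)\<^sup>2 / \<eta> \<le> \<eta> * (a + b)" .
    hence "p $ j * (w $ j + (w $ j)\<^sup>2 / \<eta>) \<le> p $ j * (\<eta> * (a + b))"
      using p_nonneg[of j] by (rule mult_left_mono)
    thus ?thesis unfolding a_def b_def by (simp add: mult_ac)
  qed
  have "(\<Sum>j\<in>UNIV. p $ j * (w $ j + (w $ j)\<^sup>2 / \<eta>)) \<le>
      \<eta> * ((transpose A *v p) \<bullet> (M *v x + (M ** M) *v x))"
    unfolding rhs sum_distrib_left by (intro sum_mono termb)
  thus ?thesis using step unfolding p_def by linarith
qed

theorem corollary2p3: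
  fixes \<eta> :: real and A :: "real^'n^'m" and x :: "real^'n"
  assumes eta_pos: "\<eta> > 0"
    and A_nonneg: "\<forall>i j. A $ i $ j \<ge> 0"
    and x_nonneg: "\<forall>i. x $ i \<ge> 0"
    and Ax_bound: "infnorm (A *v x) \<le> 1"
  shows "(\<forall>M :: real^'n^'n.
            is_diag M \<and> loewner_le M (mat 1) \<and>
            infnorm (A *v (\<eta> *\<^sub>R (M *v x))) / \<eta> \<le> 1/2 \<longrightarrow>
            smax \<eta> (A *v (x + \<eta> *\<^sub>R (M *v x)))
              \<le> smax \<eta> (A *v x)
                 + \<eta> * ((transpose A *v grad_smax \<eta> (A *v x)) \<bullet> (M *v x + (M ** M) *v x)))
       \<and> (\<forall>(lam::real) (c::real^'n).
            lam > 0 \<and> (\<forall>i. c $ i > 0) \<longrightarrow>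
            (let M = (\<chi> i j. if i = j
                             then max (1 - lam * (((transpose A *v grad_smax \<eta> (A *v x)) $ i) / c $ i)) 0
                             else 0) :: real^'n^'n;
                 d = \<eta> *\<^sub>R (M *v x)
             in infnorm (A *v d) / \<eta> \<le> 1/2 \<longrightarrow>
                (smax \<eta> (A *v (x + d)) - smax \<eta> (A *v x)) / (c \<bullet> d) \<le> 1 / lam))"
  proof (intro conjI allI impI)
  fix M :: "real^'n^'n"
  assume "is_diag M \<and> loewner_le M (mat 1) \<and> infnorm (A *v (\<eta> *\<^sub>R (M *v x))) / \<eta> \<le> 1/2"
  thus "smax \<eta> (A *v (x + \<eta> *\<^sub>R (M *v x)))
              \<le> smax \<eta> (A *v x)
                 + \<eta> * ((transpose A *v grad_smax \<eta> (A *v x)) \<bullet> (M *v x + (M ** M) *v x))"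
    using part1[OF eta_pos A_nonneg x_nonneg Ax_bound] by blast
next
  fix lam :: real and c :: "real^'n"
  assume H: "lam > 0 \<and> (\<forall>i. c $ i > 0)"
  hence lam: "lam > 0" and cpos: "\<And>i. c $ i > 0" by auto
  define g where "g = transpose A *v grad_smax \<eta> (A *v x)"
  define f where "f i = max (1 - lam * (g $ i / c $ i)) 0" for i
  define M :: "real^'n^'n" where "M = (\<chi> i j. if i = j then f i else 0)"
  have g_nonneg: "g $ i \<ge> 0" for i
    unfolding g_def grad_smax_def using A_nonneg
    by (auto simp: matrix_vector_mult_def transpose_def intro!: sum_nonneg mult_nonneg_nonneg divide_nonneg_pos sum_pos)
  have diag: "is_diag M" unfolding M_def is_diag_def by simp
  have Mx: "(M *v x) $ i = f i * x $ i" for i using diag_mv[OF diag] unfolding M_def by simp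
  have MMx: "((M ** M) *v x) $ i = f i * (f i * x $ i)" for i
    unfolding matrix_vector_mul_assoc[symmetric] using diag_mv[OF diag] unfolding M_def by simp
  have f_nonneg: "f i \<ge> 0" for i unfolding f_def by simp
  show "let M = (\<chi> i j. if i = j
                             then max (1 - lam * (((transpose A *v grad_smax \<eta> (A *v x)) $ i) / c $ i)) 0
                             else 0) :: real^'n^'n;
                 d = \<eta> *\<^sub>R (M *v x)
             in infnorm (A *v d) / \<eta> \<le> 1/2 \<longrightarrow>
                (smax \<eta> (A *v (x + d)) - smax \<eta> (A *v x)) / (c \<bullet> d) \<le> 1 / lam"
    unfolding Let_def g_def[symmetric] f_def[symmetric] M_def[symmetric]
  proof
    assume small: "infnorm (A *v (\<eta> *\<^sub>R (M *v x))) / \<eta> \<le> 1/2"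
    define \<Delta> where "\<Delta> = smax \<eta> (A *v (x + \<eta> *\<^sub>R (M *v x))) - smax \<eta> (A *v x)"
    have b1: "\<Delta> \<le> \<eta> * (g \<bullet> (M *v x + (M ** M) *v x))"
      using part1[OF eta_pos A_nonneg x_nonneg Ax_bound diag small] unfolding \<Delta>_def g_def by linarith
    have gi: "g \<bullet> (M *v x + (M ** M) *v x) = (\<Sum>i\<in>UNIV. g $ i * (f i * x $ i + f i * (f i * x $ i)))"
      by (simp add: inner_vec_def Mx MMx)
    have cd: "c \<bullet> (\<eta> *\<^sub>R (M *v x)) = \<eta> * (\<Sum>i\<in>UNIV. c $ i * (f i * x $ i))"
      by (simp add: inner_vec_def Mx sum_distrib_left mult_ac)
    have cd_nonneg: "c \<bullet> (\<eta> *\<^sub>R (M *v x)) \<ge> 0"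
      unfolding cd using eta_pos cpos f_nonneg x_nonneg
      by (intro mult_nonneg_nonneg sum_nonneg) (auto intro: less_imp_le)
    have termw: "g $ i * (f i * x $ i + f i * (f i * x $ i)) \<le> 1 / lam * (c $ i * (f i * x $ i))" for i
    proof (cases "f i = 0")
      case True thus ?thesis by simp
    next
      case False
      hence fi: "f i = 1 - lam * (g $ i / c $ i)" unfolding f_def by (auto simp: max_def split: if_splits)
      define t where "t = lam * (g $ i / c $ i)"
      have ci: "c $ i > 0" by (rule cpos)
      have t2: "t * (2 - t) \<le> 1"
      proof -
        have "0 \<le> (1 - t)\<^sup>2" by simp
        thus ?thesis by (simp add: power2_eq_square algebra_simps)
      qed
      have "g $ i * (1 + f i) = (c $ i / lam) * (t * (2 - t))"
        unfolding fi t_def using lam ci by (simp add: field_simps)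
      also have "\<dots> \<le> (c $ i / lam) * 1"
        using t2 lam ci by (intro mult_left_mono) auto
      finally have k: "g $ i * (1 + f i) \<le> c $ i / lam" by simp
      have "g $ i * (f i * x $ i + f i * (f i * x $ i)) = (g $ i * (1 + f i)) * (f i * x $ i)"
        by (simp add: algebra_simps)
      also have "\<dots> \<le> (c $ i / lam) * (f i * x $ i)"
        using k f_nonneg[of i] x_nonneg by (intro mult_right_mono) auto
      finally show ?thesis by simp
    qed
    have keyb: "\<Delta> \<le> 1 / lam * (c \<bullet> (\<eta> *\<^sub>R (M *v x)))"
    proof -
      have "(\<Sum>i\<in>UNIV. g $ i * (f i * x $ i + f i * (f i * x $ i))) \<le>
          1 / lam * (\<Sum>i\<in>UNIV. c $ i * (f i * x $ i))"
        unfolding sum_distrib_left by (intro sum_mono termw)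
      hence "\<eta> * (\<Sum>i\<in>UNIV. g $ i * (f i * x $ i + f i * (f i * x $ i))) \<le>
          \<eta> * (1 / lam * (\<Sum>i\<in>UNIV. c $ i * (f i * x $ i)))"
        using eta_pos by (intro mult_left_mono) auto
      thus ?thesis using b1 unfolding gi cd by (simp add: mult_ac)
    qed
    show "(smax \<eta> (A *v (x + \<eta> *\<^sub>R (M *v x))) - smax \<eta> (A *v x)) / (c \<bullet> (\<eta> *\<^sub>R (M *v x))) \<le> 1 / lam"
    proof (cases "c \<bullet> (\<eta> *\<^sub>R (M *v x)) = 0")
      case True thus ?thesis using lam by (simp only: division_ring_divide_zero) simp
    next
      case False
      hence "c \<bullet> (\<eta> *\<^sub>R (M *v x)) > 0" using cd_nonneg by linarith
      thus ?thesis using keyb unfolding \<Delta>_def by (simp add: pos_divide_le_eq)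
    qed
  qed
qed

end
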